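(* Let $p,q,r\in\mathbb{Q}$ with $r\neq0$, and suppose $t^3-pt^2-qt-r$ has three distinct roots $\alpha_1,\alpha_2,\alpha_3$ with $\alpha_1\neq p$. Let $x,y,z$ be integers and $$M=\begin{pmatrix} x & rz & ry+prz\\ y & x+qz & qy+(pq+r)z\\ z & y+pz & x+py+(p^2+q)z\end{pmatrix}.$$ Suppose $|x+y\alpha_1+z\alpha_1^2|>|x+y\alpha_j+z\alpha_j^2|$ for $j=2,3$. Then for all $h,k\in\{1,2,3\}$, $$\lim_{n\to\infty}\frac{M^n_{2,2}}{M^n_{h,k}}=\bar M_{h,k},\qquad \bar M=\begin{pmatrix}\frac{\alpha_1^2(\alpha_1-p)}{r} & \frac{\alpha_1(\alpha_1-p)}{r} & \frac{\alpha_1-p}{r}\\ \alpha_1 & 1 & \frac{1}{\alpha_1}\\ \alpha_1(\alpha_1-p) & \alpha_1-p & \frac{\alpha_1-p}{\alpha_1}\end{pmatrix},$$ and $$\lim_{n\to\infty}\frac{M^n_{3,3}}{M^n_{h,k}}=\tilde M_{h,k},\qquad \tilde M=\begin{pmatrix}\frac{\alpha_1^3}{r} & \frac{\alpha_1^2}{r} & \frac{\alpha_1}{r}\\ \frac{\alpha_1^2}{\alpha_1-p} & \frac{\alpha_1}{\alpha_1-p} & \frac{1}{\alpha_1-p}\\ \alpha_1^2 & \alpha_1 & 1\end{pmatrix}.$$ (Equivalently, $\bar M_{1,1}=-\alpha_1(\alpha_2+\alpha_3)/(\alpha_2\alpha_3)$, $\tilde M_{1,1}=\alpha_1^2/(\alpha_2\alpha_3)$,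 etc., using $\alpha_1-p=-(\alpha_2+\alpha_3)$ and $r=\alpha_1\alpha_2\alpha_3$.)
   Context: $M^n_{a,b}$ denotes the $(a,b)$-entry of the $n$-th power of $M$. The matrix $M$ equals $xI+yA+zA^2$, where $A=\begin{pmatrix}0&0&r\\1&0&q\\0&1&p\end{pmatrix}$ is the companion matrix of $t^3-pt^2-qt-r$. *)

theory Defs
  imports Complex_Main "Jordan_Normal_Form.Matrix"
begin

text \<open>The matrix M (entries over the complex numbers, 1-based entry (h,k) is stored at (h-1,k-1)).\<close>
definition Mmat :: "rat \<Rightarrow> rat \<Rightarrow> rat \<Rightarrow> int \<Rightarrow> int \<Rightarrow> int \<Rightarrow> complex mat" where
  "Mmat p q r x y z = (let P = of_rat p; Q = of_rat q; R = of_rat r;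
      X = of_int x; Y = of_int y; Z = of_int z in
     mat_of_rows_list 3
      [[X, R*Z, R*Y + P*R*Z],
       [Y, X + Q*Z, Q*Y + (P*Q + R)*Z],
       [Z, Y + P*Z, X + P*Y + (P^2 + Q)*Z]])"

definition Mbar :: "rat \<Rightarrow> rat \<Rightarrow> complex \<Rightarrow> complex mat" where
  "Mbar p r a = (let P = of_rat p; R = of_rat r in
     mat_of_rows_list 3
      [[a^2*(a - P)/R, a*(a - P)/R, (a - P)/R],
       [a, 1, 1/a],
       [a*(a - P), a - P, (a - P)/a]])"

definition Mtilde :: "rat \<Rightarrow> rat \<Rightarrow> complex \<Rightarrow> complex mat" where
  "Mtilde p r a = (let P = of_rat p; R = of_rat r in
     mat_of_rows_list 3
      [[a^3/R, a^2/R, a/R],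
       [a^2/(a - P), a/(a - P), 1/(a - P)],
       [a^2, a, 1]])"

end

theory Submission
  imports Defs
begin

definition Mc :: "complex \<Rightarrow> complex \<Rightarrow> complex \<Rightarrow> complex \<Rightarrow> complex \<Rightarrow> complex \<Rightarrow> complex mat" where
 "Mc P Q R X Y Z = mat_of_rows_list 3
      [[X, R*Z, R*Y + P*R*Z],
       [Y, X + Q*Z, Q*Y + (P*Q + R)*Z],
       [Z, Y + P*Z, X + P*Y + (P^2 + Q)*Z]]"

lemma Mc_dims[simp]: "dim_row (Mc P Q R X Y Z) = 3" "dim_col (Mc P Q R X Y Z) = 3"
  by (auto simp: Mc_def mat_of_rows_list_def)

lemma less3: "(k::nat) < 3 \<Longrightarrow> k = 0 \<or> k = 1 \<or> k = 2" by auto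

lemma Mc_idx: "Mc P Q R X Y Z $$ (i,j) = [[X, R*Z, R*Y + P*R*Z],
       [Y, X + Q*Z, Q*Y + (P*Q + R)*Z],
       [Z, Y + P*Z, X + P*Y + (P^2 + Q)*Z]] ! i ! j" if "i<3" "j<3"
  using that by (auto simp: Mc_def mat_of_rows_list_def)

lemma left_eig:
  fixes a :: complex
  assumes f: "a^3 - P*a^2 - Q*a - R = 0" and k: "k<3"
  shows "(\<Sum>l<3. a^l * Mc P Q R X Y Z $$ (l,k)) = (X + Y*a + Z*a^2) * a^k"
proof -
  have s: "(\<Sum>l<3. g l) = g 0 + g 1 + g 2" for g :: "nat \<Rightarrow> complex"
    by (simp add: numeral_3_eq_3 eval_nat_numeral)
  let ?f = "a^3 - P*a^2 - Q*a - R"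
  have e0: "(\<Sum>l<3. a^l * Mc P Q R X Y Z $$ (l,0)) - (X + Y*a + Z*a^2) * a^0 = 0"
    by (simp add: s Mc_idx power2_eq_square algebra_simps)
  have e1: "(\<Sum>l<3. a^l * Mc P Q R X Y Z $$ (l,1)) - (X + Y*a + Z*a^2) * a^1 = -Z * ?f"
    by (simp add: s Mc_idx power2_eq_square power3_eq_cube algebra_simps)
  have e2: "(\<Sum>l<3. a^l * Mc P Q R X Y Z $$ (l,2)) - (X + Y*a + Z*a^2) * a^2 = -(Y + Z*(a+P)) * ?f"
    by (simp add: s Mc_idx power2_eq_square power3_eq_cube algebra_simps)
  from less3[OF k] e0 e1 e2 f show ?thesis
    by (auto simp del: power_0 power_one_right)
qed

lemma vieta:
  fixes a1 a2 a3 P Q R :: complex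
  assumes f1: "a1^3 - P*a1^2 - Q*a1 - R = 0" and f2: "a2^3 - P*a2^2 - Q*a2 - R = 0"
    and f3: "a3^3 - P*a3^2 - Q*a3 - R = 0"
    and d: "a1 \<noteq> a2" "a1 \<noteq> a3" "a2 \<noteq> a3"
  shows "P = a1+a2+a3" "Q = -(a1*a2+a1*a3+a2*a3)" "R = a1*a2*a3"
proof -
  have i12: "(a1^3 - P*a1^2 - Q*a1 - R) - (a2^3 - P*a2^2 - Q*a2 - R) = (a1-a2)*(a1^2+a1*a2+a2^2 - P*(a1+a2) - Q)"
    by (simp add: algebra_simps power2_eq_square power3_eq_cube)
  have i13: "(a1^3 - P*a1^2 - Q*a1 - R) - (a3^3 - P*a3^2 - Q*a3 - R) = (a1-a3)*(a1^2+a1*a3+a3^2 - P*(a1+a3) - Q)"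
    by (simp add: algebra_simps power2_eq_square power3_eq_cube)
  have g12: "a1^2+a1*a2+a2^2 - P*(a1+a2) - Q = 0" using i12 f1 f2 d by simp
  have g13: "a1^2+a1*a3+a3^2 - P*(a1+a3) - Q = 0" using i13 f1 f3 d by simp
  have "(a1^2+a1*a2+a2^2 - P*(a1+a2) - Q) - (a1^2+a1*a3+a3^2 - P*(a1+a3) - Q) = (a2-a3)*(a1+a2+a3-P)"
    by (simp add: algebra_simps power2_eq_square)
  with g12 g13 d have "a1+a2+a3-P = 0" by simp
  thus pP: "P = a1+a2+a3" by simp
  from g12 pP show qQ: "Q = -(a1*a2+a1*a3+a2*a3)" by (simp add: algebra_simps power2_eq_square)
  from f1 pP qQ show "R = a1*a2*a3" by (simp add: algebra_simps power2_eq_square power3_eq_cube)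
qed

definition lam :: "complex \<Rightarrow> complex \<Rightarrow> complex \<Rightarrow> complex \<Rightarrow> complex" where
  "lam X Y Z a = X + Y*a + Z*a^2"
definition V :: "complex \<Rightarrow> complex \<Rightarrow> complex \<Rightarrow> nat \<Rightarrow> complex" where
  "V P R a h = (if h = 0 then R/a else if h = 1 then a - P else 1)"
definition D :: "complex \<Rightarrow> complex \<Rightarrow> complex \<Rightarrow> complex" where
  "D P Q a = 3*a^2 - 2*P*a - Q"
definition T where
  "T P Q R X Y Z a n h k = lam X Y Z a ^ n * V P R a h * a^k / D P Q a"

lemma base:
  fixes a1 a2 a3 :: complex
  assumes d: "a1 \<noteq> a2" "a1 \<noteq> a3" "a2 \<noteq> a3" and nz: "a1 \<noteq> 0" "a2 \<noteq> 0" "a3 \<noteq> 0"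
    and h: "h < 3" and k: "k < 3"
  shows "T (a1+a2+a3) (-(a1*a2+a1*a3+a2*a3)) (a1*a2*a3) X Y Z a1 0 h k
       + T (a1+a2+a3) (-(a1*a2+a1*a3+a2*a3)) (a1*a2*a3) X Y Z a2 0 h k
       + T (a1+a2+a3) (-(a1*a2+a1*a3+a2*a3)) (a1*a2*a3) X Y Z a3 0 h k = (if h = k then 1 else 0)"
proof -
  have D1: "D (a1+a2+a3) (-(a1*a2+a1*a3+a2*a3)) a1 = (a1-a2)*(a1-a3)"
    by (simp add: D_def algebra_simps power2_eq_square)
  have D2: "D (a1+a2+a3) (-(a1*a2+a1*a3+a2*a3)) a2 = (a2-a1)*(a2-a3)"
    by (simp add: D_def algebra_simps power2_eq_square)
  have D3: "D (a1+a2+a3) (-(a1*a2+a1*a3+a2*a3)) a3 = (a3-a1)*(a3-a2)"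
    by (simp add: D_def algebra_simps power2_eq_square)
  have n12: "a1 - a2 \<noteq> 0" "a2 - a1 \<noteq> 0" "a1 - a3 \<noteq> 0" "a3 - a1 \<noteq> 0" "a2 - a3 \<noteq> 0" "a3 - a2 \<noteq> 0"
    using d by auto
  show ?thesis unfolding T_def D1 D2 D3 using less3[OF h] less3[OF k]
    apply (elim disjE)
    apply (simp_all add: V_def)
    apply (simp_all add: divide_simps n12 nz)
    apply (simp_all add: algebra_simps power2_eq_square)
    using d by auto
qed

lemma power_formula:
  fixes a1 a2 a3 P Q R X Y Z :: complex
  assumes f1: "a1^3 - P*a1^2 - Q*a1 - R = 0" and f2: "a2^3 - P*a2^2 - Q*a2 - R = 0"
    and f3: "a3^3 - P*a3^2 - Q*a3 - R = 0"
    and d: "a1 \<noteq> a2" "a1 \<noteq> a3" "a2 \<noteq> a3" and R: "R \<noteq> 0"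
  shows "h < 3 \<Longrightarrow> k < 3 \<Longrightarrow> (Mc P Q R X Y Z ^\<^sub>m n) $$ (h,k) =
      T P Q R X Y Z a1 n h k + T P Q R X Y Z a2 n h k + T P Q R X Y Z a3 n h k"
proof (induction n arbitrary: h k)
  case 0
  note v = vieta[OF f1 f2 f3 d]
  have nz: "a1 \<noteq> 0" "a2 \<noteq> 0" "a3 \<noteq> 0" using R v(3) by auto
  have "T P Q R X Y Z a1 0 h k + T P Q R X Y Z a2 0 h k + T P Q R X Y Z a3 0 h k = (if h = k then 1 else 0)"
    unfolding v using base[OF d nz 0] .
  then show ?case using 0 by simp
next
  case (Suc n)
  have s: "(\<Sum>l<3. g l) = (\<Sum>l\<in>{0..<3}. g l)" for g :: "nat \<Rightarrow> complex"
    by (simp add: lessThan_atLeast0)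
  have step: "(\<Sum>l<3. T P Q R X Y Z a n h l * Mc P Q R X Y Z $$ (l,k)) = T P Q R X Y Z a (Suc n) h k"
    if fa: "a^3 - P*a^2 - Q*a - R = 0" for a
  proof -
    have "(\<Sum>l<3. T P Q R X Y Z a n h l * Mc P Q R X Y Z $$ (l,k))
        = (lam X Y Z a ^ n * V P R a h / D P Q a) * (\<Sum>l<3. a^l * Mc P Q R X Y Z $$ (l,k))"
      unfolding T_def sum_distrib_left by (rule sum.cong) (simp_all add: ac_simps)
    also have "\<dots> = (lam X Y Z a ^ n * V P R a h / D P Q a) * ((X + Y*a + Z*a^2) * a^k)"
      using left_eig[OF fa Suc.prems(2)] by simp
    also have "\<dots> = T P Q R X Y Z a (Suc n) h k"
      by (simp add: T_def lam_def)
    finally show ?thesis .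
  qed
  have "(Mc P Q R X Y Z ^\<^sub>m Suc n) $$ (h,k) = (\<Sum>l<3. (Mc P Q R X Y Z ^\<^sub>m n) $$ (h,l) * Mc P Q R X Y Z $$ (l,k))"
    using Suc.prems by (simp add: scalar_prod_def s)
  also have "\<dots> = (\<Sum>l<3. (T P Q R X Y Z a1 n h l + T P Q R X Y Z a2 n h l + T P Q R X Y Z a3 n h l) * Mc P Q R X Y Z $$ (l,k))"
    using Suc.IH[OF Suc.prems(1)] by (intro sum.cong) auto
  also have "\<dots> = (\<Sum>l<3. T P Q R X Y Z a1 n h l * Mc P Q R X Y Z $$ (l,k))
     + (\<Sum>l<3. T P Q R X Y Z a2 n h l * Mc P Q R X Y Z $$ (l,k))
     + (\<Sum>l<3. T P Q R X Y Z a3 n h l * Mc P Q R X Y Z $$ (l,k))"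
    by (simp add: distrib_right sum.distrib)
  also have "\<dots> = T P Q R X Y Z a1 (Suc n) h k + T P Q R X Y Z a2 (Suc n) h k + T P Q R X Y Z a3 (Suc n) h k" using step[OF f1] step[OF f2] step[OF f3] by simp
  finally show ?case .
qed

lemma ratio_lim:
  fixes L l2 l3 b1 b2 b3 c1 c2 c3 :: complex
  assumes L: "L \<noteq> 0" and n2: "norm l2 < norm L" and n3: "norm l3 < norm L" and c1: "c1 \<noteq> 0"
  shows "(\<lambda>n. (L^n*b1 + l2^n*b2 + l3^n*b3)/(L^n*c1 + l2^n*c2 + l3^n*c3)) \<longlonglongrightarrow> b1/c1"
proof -
  have eq: "(L^n*b1 + l2^n*b2 + l3^n*b3)/(L^n*c1 + l2^n*c2 + l3^n*c3)
      = (b1 + (l2/L)^n*b2 + (l3/L)^n*b3)/(c1 + (l2/L)^n*c2 + (l3/L)^n*c3)" for n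
  proof -
    have Ln: "L^n \<noteq> 0" using L by simp
    have "(L^n*b1 + l2^n*b2 + l3^n*b3) = L^n * (b1 + (l2/L)^n*b2 + (l3/L)^n*b3)"
      "(L^n*c1 + l2^n*c2 + l3^n*c3) = L^n * (c1 + (l2/L)^n*c2 + (l3/L)^n*c3)"
      using Ln L by (simp_all add: power_divide field_simps)
    thus ?thesis by (simp only: mult_divide_mult_cancel_left[OF Ln])
  qed
  have z2: "(\<lambda>n. (l2/L)^n) \<longlonglongrightarrow> 0" using n2 L by (intro LIMSEQ_power_zero) (simp add: norm_divide divide_less_eq)
  have z3: "(\<lambda>n. (l3/L)^n) \<longlonglongrightarrow> 0" using n3 L by (intro LIMSEQ_power_zero) (simp add: norm_divide divide_less_eq)
  have "(\<lambda>n. (b1 + (l2/L)^n*b2 + (l3/L)^n*b3)/(c1 + (l2/L)^n*c2 + (l3/L)^n*c3)) \<longlonglongrightarrow> (b1 + 0*b2 + 0*b3)/(c1 + 0*c2 + 0*c3)"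
    using c1 by (intro tendsto_intros z2 z3) simp
  thus ?thesis unfolding eq by simp
qed

lemma entry_lim:
  fixes a1 a2 a3 P Q R X Y Z :: complex
  assumes f1: "a1^3 - P*a1^2 - Q*a1 - R = 0" and f2: "a2^3 - P*a2^2 - Q*a2 - R = 0"
    and f3: "a3^3 - P*a3^2 - Q*a3 - R = 0"
    and d: "a1 \<noteq> a2" "a1 \<noteq> a3" "a2 \<noteq> a3" and R: "R \<noteq> 0" and aP: "a1 \<noteq> P"
    and n2: "norm (lam X Y Z a2) < norm (lam X Y Z a1)" and n3: "norm (lam X Y Z a3) < norm (lam X Y Z a1)"
    and ij: "i < 3" "j < 3" "i' < 3" "j' < 3"
  shows "(\<lambda>n. (Mc P Q R X Y Z ^\<^sub>m n) $$ (i',j') / (Mc P Q R X Y Z ^\<^sub>m n) $$ (i,j))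
      \<longlonglongrightarrow> (V P R a1 i' * a1^j') / (V P R a1 i * a1^j)"
proof -
  note v = vieta[OF f1 f2 f3 d]
  have nz: "a1 \<noteq> 0" using R v(3) by auto
  have "D P Q a1 = (a1-a2)*(a1-a3)" unfolding v D_def
    by (simp add: algebra_simps power2_eq_square)
  hence D1: "D P Q a1 \<noteq> 0" using d by simp
  have V1: "V P R a1 i \<noteq> 0" using ij R nz aP by (auto simp: V_def)
  have L: "lam X Y Z a1 \<noteq> 0" using n2 by auto
  have Tform: "T P Q R X Y Z a n h k = lam X Y Z a ^ n * (V P R a h * a^k / D P Q a)" for a n h k
    by (simp add: T_def)
  have "(\<lambda>n. (Mc P Q R X Y Z ^\<^sub>m n) $$ (i',j') / (Mc P Q R X Y Z ^\<^sub>m n) $$ (i,j))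
      \<longlonglongrightarrow> (V P R a1 i' * a1^j' / D P Q a1) / (V P R a1 i * a1^j / D P Q a1)"
    unfolding power_formula[OF f1 f2 f3 d R ij(1,2)] power_formula[OF f1 f2 f3 d R ij(3,4)] Tform
    by (rule ratio_lim[OF L n2 n3]) (use V1 D1 nz in simp)
  also have "(V P R a1 i' * a1^j' / D P Q a1) / (V P R a1 i * a1^j / D P Q a1) = (V P R a1 i' * a1^j') / (V P R a1 i * a1^j)"
    using D1 by simp
  finally show ?thesis .
qed

lemma Mbar_idx: "i < 3 \<Longrightarrow> j < 3 \<Longrightarrow> Mbar p r a $$ (i,j) =
     [[a^2*(a - of_rat p)/of_rat r, a*(a - of_rat p)/of_rat r, (a - of_rat p)/of_rat r],
       [a, 1, 1/a],
       [a*(a - of_rat p), a - of_rat p, (a - of_rat p)/a]] ! i ! j"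
  by (simp add: Mbar_def Let_def mat_of_rows_list_def)

lemma Mtilde_idx: "i < 3 \<Longrightarrow> j < 3 \<Longrightarrow> Mtilde p r a $$ (i,j) =
     [[a^3/of_rat r, a^2/of_rat r, a/of_rat r],
       [a^2/(a - of_rat p), a/(a - of_rat p), 1/(a - of_rat p)],
       [a^2, a, 1]] ! i ! j"
  by (simp add: Mtilde_def Let_def mat_of_rows_list_def)

lemma target_vals:
  fixes a :: complex
  assumes a: "a \<noteq> 0" and aP: "a \<noteq> of_rat p" and r: "r \<noteq> 0" and ij: "i < 3" "j < 3"
  shows "(V (of_rat p) (of_rat r) a 1 * a^1)/(V (of_rat p) (of_rat r) a i * a^j) = Mbar p r a $$ (i,j)"
    "(V (of_rat p) (of_rat r) a 2 * a^2)/(V (of_rat p) (of_rat r) a i * a^j) = Mtilde p r a $$ (i,j)"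
proof -
  have aP': "a - of_rat p \<noteq> 0" using aP by simp
  have r': "(of_rat r :: complex) \<noteq> 0" using r by simp
  show "(V (of_rat p) (of_rat r) a 1 * a^1)/(V (of_rat p) (of_rat r) a i * a^j) = Mbar p r a $$ (i,j)"
    using less3[OF ij(1)] less3[OF ij(2)]
    apply (elim disjE)
    apply (simp_all add: Mbar_idx V_def field_simps a aP aP' r' power2_eq_square)
    apply (simp_all add: right_diff_distrib[symmetric] aP' a)
    done
  show "(V (of_rat p) (of_rat r) a 2 * a^2)/(V (of_rat p) (of_rat r) a i * a^j) = Mtilde p r a $$ (i,j)"
    using less3[OF ij(1)] less3[OF ij(2)]
    apply (elim disjE)
    apply (simp_all add: Mtilde_idx V_def field_simps a aP aP' r' power2_eq_square power3_eq_cube)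
    done
qed

theorem mainTheorem4:
  fixes p q r :: rat and x y z :: int and a1 a2 a3 :: complex
  assumes "r \<noteq> 0"
    and roots: "\<forall>a\<in>{a1, a2, a3}. a^3 - of_rat p * a^2 - of_rat q * a - of_rat r = 0"
    and distinct: "a1 \<noteq> a2" "a1 \<noteq> a3" "a2 \<noteq> a3"
    and "a1 \<noteq> of_rat p"
    and dom: "\<forall>a\<in>{a2, a3}. cmod (of_int x + of_int y * a1 + of_int z * a1^2)
                              > cmod (of_int x + of_int y * a + of_int z * a^2)"
  shows "\<forall>h\<in>{1,2,3}. \<forall>k\<in>{1,2,3}.
     (\<lambda>n. (Mmat p q r x y z ^\<^sub>m n) $$ (1, 1) / (Mmat p q r x y z ^\<^sub>m n) $$ (h - 1, k - 1))
        \<longlonglongrightarrow> Mbar p r a1 $$ (h - 1, k - 1)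
   \<and> (\<lambda>n. (Mmat p q r x y z ^\<^sub>m n) $$ (2, 2) / (Mmat p q r x y z ^\<^sub>m n) $$ (h - 1, k - 1))
        \<longlonglongrightarrow> Mtilde p r a1 $$ (h - 1, k - 1)"
proof -
  have MM: "Mmat p q r x y z = Mc (of_rat p) (of_rat q) (of_rat r) (of_int x) (of_int y) (of_int z)"
    by (simp add: Mmat_def Mc_def Let_def)
  have f1: "a1^3 - of_rat p*a1^2 - of_rat q*a1 - of_rat r = 0"
   and f2: "a2^3 - of_rat p*a2^2 - of_rat q*a2 - of_rat r = 0"
   and f3: "a3^3 - of_rat p*a3^2 - of_rat q*a3 - of_rat r = 0" using roots by auto
  have R: "(of_rat r :: complex) \<noteq> 0" using assms(1) by simp
  have n2: "norm (lam (of_int x) (of_int y) (of_int z) a2) < norm (lam (of_int x) (of_int y) (of_int z) a1)"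
   and n3: "norm (lam (of_int x) (of_int y) (of_int z) a3) < norm (lam (of_int x) (of_int y) (of_int z) a1)"
    using dom by (auto simp: lam_def)
  have a1nz: "a1 \<noteq> 0" using f1 R by auto
  note EL = entry_lim[OF f1 f2 f3 distinct R assms(6) n2 n3]
  show ?thesis
  proof (intro ballI conjI)
    fix h k :: nat assume h: "h \<in> {1,2,3}" and k: "k \<in> {1,2,3}"
    have ij: "h - 1 < 3" "k - 1 < 3" using h k by auto
    show "(\<lambda>n. (Mmat p q r x y z ^\<^sub>m n) $$ (1, 1) / (Mmat p q r x y z ^\<^sub>m n) $$ (h - 1, k - 1))
        \<longlonglongrightarrow> Mbar p r a1 $$ (h - 1, k - 1)"
      using EL[of "h-1" "k-1" 1 1] ij target_vals(1)[OF a1nz assms(6) assms(1) ij] unfolding MM by simp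
    show "(\<lambda>n. (Mmat p q r x y z ^\<^sub>m n) $$ (2, 2) / (Mmat p q r x y z ^\<^sub>m n) $$ (h - 1, k - 1))
        \<longlonglongrightarrow> Mtilde p r a1 $$ (h - 1, k - 1)"
      using EL[of "h-1" "k-1" 2 2] ij target_vals(2)[OF a1nz assms(6) assms(1) ij] unfolding MM by simp
  qed
qed

end
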